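(* Let $n\ge 1$, let $\beta\in[0,1)$, let $B_0\in\mathbb{R}^{n\times n}$ be symmetric positive definite, and let $P_f\in\mathbb{R}^{n\times n}$ be symmetric positive semidefinite and rank deficient. Let $B=(1-\beta)B_0+\beta P_f$. Then \[ \max\left[\frac{1}{\kappa(B_0)}+\frac{\beta\lambda_1(P_f)}{(1-\beta)\lambda_1(B_0)},\ \left(\frac{1}{\kappa(B_0)}+\frac{\beta\lambda_1(P_f)}{(1-\beta)\lambda_1(B_0)}\right)^{-1}\right]\le \kappa(B)\le \kappa(B_0)\left(1+\frac{\beta\lambda_1(P_f)}{(1-\beta)\lambda_1(B_0)}\right). \]
   Context: For a symmetric matrix $A\in\mathbb{R}^{n\times n}$, $\lambda_k(A)$ denotes its $k$-th largest eigenvalue ($\lambda_1$ largest, $\lambda_n$ smallest). For a symmetric positive definite matrix $A$, the condition number is $\kappa(A)=\lambda_1(A)/\lambda_n(A)$. *)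

theory Defs
  imports "HOL-Analysis.Analysis"
begin

text \<open>Real n x n matrices are rendered as real^'n^'n, with n = CARD('n) \<ge> 1.\<close>

definition sym_mat :: "real^'n^'n \<Rightarrow> bool" where
  "sym_mat A \<longleftrightarrow> transpose A = A"

definition pos_def :: "real^'n^'n \<Rightarrow> bool" where
  "pos_def A \<longleftrightarrow> sym_mat A \<and> (\<forall>x. x \<noteq> 0 \<longrightarrow> x \<bullet> (A *v x) > 0)"

definition pos_semidef :: "real^'n^'n \<Rightarrow> bool" where
  "pos_semidef A \<longleftrightarrow> sym_mat A \<and> (\<forall>x. x \<bullet> (A *v x) \<ge> 0)"

definition is_eigenvalue :: "real^'n^'n \<Rightarrow> real \<Rightarrow> bool" where
  "is_eigenvalue A c \<longleftrightarrow> (\<exists>v. v \<noteq> 0 \<and> A *v v = c *\<^sub>R v)"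

text \<open>Largest eigenvalue lambda_1 and smallest eigenvalue lambda_n (meaningful for symmetric A).\<close>
definition lambda_max :: "real^'n^'n \<Rightarrow> real" where
  "lambda_max A = Max {c. is_eigenvalue A c}"

definition lambda_min :: "real^'n^'n \<Rightarrow> real" where
  "lambda_min A = Min {c. is_eigenvalue A c}"

definition cond_num :: "real^'n^'n \<Rightarrow> real" where
  "cond_num A = lambda_max A / lambda_min A"

end

theory Submission
  imports Defs
begin

lemma sym_inner:
  fixes A :: "real^'n^'n"
  assumes "sym_mat A"
  shows "x \<bullet> (A *v y) = (A *v x) \<bullet> y"
proof -
  have "(A *v x) \<bullet> y = (transpose A *v x) \<bullet> y" using assms by (simp add: sym_mat_def)
  also have "\<dots> = x \<bullet> (A *v y)" by (simp add: dot_lmul_matrix)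
  finally show ?thesis by simp
qed

lemma psd_zero:
  fixes C :: "real^'n \<Rightarrow> real^'n"
  assumes lin: "linear C" and sym: "\<And>x y. x \<bullet> C y = C x \<bullet> y"
    and psd: "\<And>x. x \<bullet> C x \<ge> 0" and z: "x \<bullet> C x = 0"
  shows "C x = 0"
proof -
  define u where "u = C x"
  define d where "d = u \<bullet> C u"
  have d0: "d \<ge> 0" using psd d_def by simp
  have key: "0 \<le> 2 * t * (u \<bullet> u) + t^2 * d" for t
  proof -
    have "0 \<le> (x + t *\<^sub>R u) \<bullet> C (x + t *\<^sub>R u)" by (rule psd)
    also have "\<dots> = x \<bullet> C x + t * (x \<bullet> C u) + t * (u \<bullet> C x) + t^2 * d"
      using linear_add[OF lin] linear_scale[OF lin]
      by (simp add: inner_add_left inner_add_right d_def power2_eq_square algebra_simps)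
    also have "x \<bullet> C u = u \<bullet> C x" using sym[of x u] by (simp add: u_def inner_commute)
    finally show ?thesis using z by (simp add: u_def)
  qed
  define e where "e = (u \<bullet> u) / (d + 1)"
  have e0: "e \<ge> 0" using d0 by (simp add: e_def)
  have "0 \<le> 2 * (-e) * (u \<bullet> u) + (-e)^2 * d" using key[of "-e"] .
  hence "0 \<le> e * (e * d - 2 * (u \<bullet> u))" by (simp add: power2_eq_square algebra_simps)
  moreover have "e * d = (u \<bullet> u) * (d / (d+1))" using d0 by (simp add: e_def field_simps)
  moreover have "d / (d+1) < 1" using d0 by simp
  ultimately have "u \<bullet> u = 0"
  proof -
    assume a: "0 \<le> e * (e * d - 2 * (u \<bullet> u))" "e * d = (u \<bullet> u) * (d / (d+1))" "d / (d+1) < 1"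
    show "u \<bullet> u = 0"
    proof (rule ccontr)
      assume "u \<bullet> u \<noteq> 0"
      hence uu: "u \<bullet> u > 0" by (simp add: order_le_neq_trans)
      hence ep: "e > 0" using d0 by (simp add: e_def)
      have "(u \<bullet> u) * (d / (d+1)) < (u \<bullet> u) * 1" using uu a(3) by (intro mult_strict_left_mono) auto
      hence "e * d - 2 * (u \<bullet> u) < 0" using a(2) uu by linarith
      hence "e * (e * d - 2 * (u \<bullet> u)) < 0" using ep by (simp add: mult_pos_neg)
      thus False using a(1) by linarith
    qed
  qed
  thus ?thesis by (simp add: u_def)
qed


lemma eig_finite:
  fixes A :: "real^'n^'n"
  assumes "sym_mat A"
  shows "finite {c. is_eigenvalue A c}"
proof -
  define E where "E = {c. is_eigenvalue A c}"
  define f where "f c = (SOME v. v \<noteq> 0 \<and> A *v v = c *\<^sub>R v)" for c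
  have fv: "f c \<noteq> 0 \<and> A *v f c = c *\<^sub>R f c" if "c \<in> E" for c
  proof -
    have "\<exists>v. v \<noteq> 0 \<and> A *v v = c *\<^sub>R v" using that by (simp add: E_def is_eigenvalue_def)
    then show ?thesis unfolding f_def by (rule someI_ex)
  qed
  have inj: "inj_on f E"
  proof (rule inj_onI)
    fix c d assume "c \<in> E" "d \<in> E" "f c = f d"
    hence "c *\<^sub>R f c = d *\<^sub>R f c" "f c \<noteq> 0" using fv by metis+
    thus "c = d" by (simp add: scaleR_cancel_right)
  qed
  have orth: "pairwise orthogonal (f ` E)"
  proof (rule pairwiseI)
    fix v w assume "v \<in> f ` E" "w \<in> f ` E" "v \<noteq> w"
    then obtain c d where cd: "c \<in> E" "d \<in> E" "v = f c" "w = f d" by auto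
    with \<open>v \<noteq> w\<close> have "c \<noteq> d" by auto
    have "c * (v \<bullet> w) = (A *v v) \<bullet> w" using fv[OF cd(1)] cd by simp
    also have "\<dots> = v \<bullet> (A *v w)" using sym_inner[OF assms] by simp
    also have "\<dots> = d * (v \<bullet> w)" using fv[OF cd(2)] cd by simp
    finally have "(c - d) * (v \<bullet> w) = 0" by (simp add: algebra_simps)
    thus "orthogonal v w" using \<open>c \<noteq> d\<close> by (simp add: orthogonal_def)
  qed
  have "0 \<notin> f ` E" using fv by auto
  hence "finite (f ` E)" using independent_bound pairwise_orthogonal_independent orth by blast
  thus ?thesis using finite_imageD inj E_def by blast
qed

lemma rayleigh:
  fixes A :: "real^'n^'n"
  assumes sA: "sym_mat A"
  shows "(\<forall>x. norm x = 1 \<longrightarrow> lambda_min A \<le> x \<bullet> (A *v x) \<and> x \<bullet> (A *v x) \<le> lambda_max A)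
    \<and> (\<exists>x. norm x = 1 \<and> x \<bullet> (A *v x) = lambda_max A)
    \<and> (\<exists>x. norm x = 1 \<and> x \<bullet> (A *v x) = lambda_min A)"
proof -
  define E where "E = {c. is_eigenvalue A c}"
  have finE: "finite E" using eig_finite[OF sA] E_def by simp
  define q where "q x = x \<bullet> (A *v x)" for x :: "real^'n"
  have cq: "continuous_on (sphere 0 1) q" unfolding q_def
    by (intro continuous_intros continuous_on_inner linear_continuous_on) (auto intro: bounded_linear_intros
        simp: linear_conv_bounded_linear[symmetric])
  have ne: "sphere (0::real^'n) 1 \<noteq> {}" by simp
  obtain xM where xM: "xM \<in> sphere 0 1" "\<And>y. y \<in> sphere 0 1 \<Longrightarrow> q y \<le> q xM"
    using continuous_attains_sup[OF compact_sphere ne cq] by blast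
  obtain xm where xm: "xm \<in> sphere 0 1" "\<And>y. y \<in> sphere 0 1 \<Longrightarrow> q xm \<le> q y"
    using continuous_attains_inf[OF compact_sphere ne cq] by blast
  define M where "M = q xM"
  define m where "m = q xm"
  have scale: "q x = (norm x)^2 * q (x /\<^sub>R norm x)" if "x \<noteq> 0" for x
    using that by (simp add: q_def matrix_vector_mult_scaleR power2_eq_square field_simps)
  have qM: "q x \<le> M * (x \<bullet> x)" for x
  proof (cases "x = 0")
    case True thus ?thesis by (simp add: q_def)
  next
    case False
    have "q (x /\<^sub>R norm x) \<le> M" using xM(2)[of "x /\<^sub>R norm x"] False by (simp add: M_def)
    hence "(norm x)^2 * q (x /\<^sub>R norm x) \<le> (norm x)^2 * M" by (simp add: mult_left_mono)
    thus ?thesis using scale[OF False] by (simp add: power2_norm_eq_inner mult.commute)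
  qed
  have qm: "m * (x \<bullet> x) \<le> q x" for x
  proof (cases "x = 0")
    case True thus ?thesis by (simp add: q_def)
  next
    case False
    have "m \<le> q (x /\<^sub>R norm x)" using xm(2)[of "x /\<^sub>R norm x"] False by (simp add: m_def)
    hence "(norm x)^2 * m \<le> (norm x)^2 * q (x /\<^sub>R norm x)" by (simp add: mult_left_mono)
    thus ?thesis using scale[OF False] by (simp add: power2_norm_eq_inner mult.commute)
  qed
  have xx1: "xM \<bullet> xM = 1" "xm \<bullet> xm = 1" using xM(1) xm(1)
    by (simp_all add: dot_square_norm)
  have linA: "linear ((*v) A)" by simp
  have "(\<lambda>y. M *\<^sub>R y - A *v y) xM = 0"
  proof (rule psd_zero[where C="\<lambda>y. M *\<^sub>R y - A *v y"])
    show "linear (\<lambda>y. M *\<^sub>R y - A *v y)"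
      by (rule linearI) (simp_all add: matrix_vector_right_distrib matrix_vector_mult_scaleR algebra_simps)
    show "x \<bullet> (M *\<^sub>R y - A *v y) = (M *\<^sub>R x - A *v x) \<bullet> y" for x y
      using sym_inner[OF sA, of x y] by (simp add: inner_diff_left inner_diff_right inner_commute)
    show "x \<bullet> (M *\<^sub>R x - A *v x) \<ge> 0" for x using qM[of x] by (simp add: q_def inner_diff_right)
    show "xM \<bullet> (M *\<^sub>R xM - A *v xM) = 0" using xx1 by (simp add: inner_diff_right M_def q_def)
  qed
  hence eM: "A *v xM = M *\<^sub>R xM" by simp
  have "(\<lambda>y. A *v y - m *\<^sub>R y) xm = 0"
  proof (rule psd_zero[where C="\<lambda>y. A *v y - m *\<^sub>R y"])
    show "linear (\<lambda>y. A *v y - m *\<^sub>R y)"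
      by (rule linearI) (simp_all add: matrix_vector_right_distrib matrix_vector_mult_scaleR algebra_simps)
    show "x \<bullet> (A *v y - m *\<^sub>R y) = (A *v x - m *\<^sub>R x) \<bullet> y" for x y
      using sym_inner[OF sA, of x y] by (simp add: inner_diff_left inner_diff_right inner_commute)
    show "x \<bullet> (A *v x - m *\<^sub>R x) \<ge> 0" for x using qm[of x] by (simp add: q_def inner_diff_right)
    show "xm \<bullet> (A *v xm - m *\<^sub>R xm) = 0" using xx1 by (simp add: inner_diff_right m_def q_def)
  qed
  hence em: "A *v xm = m *\<^sub>R xm" by simp
  have xM0: "xM \<noteq> 0" "xm \<noteq> 0" using xM(1) xm(1) by auto
  have ME: "M \<in> E" "m \<in> E" using eM em xM0 by (auto simp: E_def is_eigenvalue_def)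
  have bnd: "m \<le> c \<and> c \<le> M" if cE: "c \<in> E" for c
  proof -
    obtain v where v: "v \<noteq> 0" "A *v v = c *\<^sub>R v" using cE by (auto simp: E_def is_eigenvalue_def)
    have qv: "q v = c * (v \<bullet> v)" using v by (simp add: q_def)
    have pos: "v \<bullet> v > 0" using v by simp
    have "c * (v \<bullet> v) \<le> M * (v \<bullet> v)" "m * (v \<bullet> v) \<le> c * (v \<bullet> v)" using qM[of v] qm[of v] qv by auto
    thus ?thesis using pos by auto
  qed
  have lmax: "lambda_max A = M" unfolding lambda_max_def E_def[symmetric]
    using finE ME bnd by (intro Max_eqI) auto
  have lmin: "lambda_min A = m" unfolding lambda_min_def E_def[symmetric]
    using finE ME bnd by (intro Min_eqI) auto
  show ?thesis
  proof (intro conjI allI impI)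
    fix x :: "real^'n" assume "norm x = 1"
    hence "x \<bullet> x = 1" by (simp add: dot_square_norm)
    thus "lambda_min A \<le> x \<bullet> (A *v x)" "x \<bullet> (A *v x) \<le> lambda_max A"
      using qM[of x] qm[of x] lmax lmin by (simp_all add: q_def)
  next
    show "\<exists>x. norm x = 1 \<and> x \<bullet> (A *v x) = lambda_max A" using xM(1) lmax by (auto simp: M_def q_def)
    show "\<exists>x. norm x = 1 \<and> x \<bullet> (A *v x) = lambda_min A" using xm(1) lmin by (auto simp: m_def q_def)
  qed
qed


lemma transpose_add': "transpose (X + Y) = transpose X + transpose (Y::real^'n^'n)"
  by (simp add: transpose_def vec_eq_iff)

theorem lemma2:
  fixes B0 Pf :: "real^'n^'n" and \<beta> :: real
  assumes "0 \<le> \<beta>" and "\<beta> < 1"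
    and "pos_def B0"
    and "pos_semidef Pf"
    and "rank Pf < CARD('n)"
  defines "B \<equiv> (1 - \<beta>) *\<^sub>R B0 + \<beta> *\<^sub>R Pf"
  shows "max (1 / cond_num B0 + \<beta> * lambda_max Pf / ((1 - \<beta>) * lambda_max B0))
             (inverse (1 / cond_num B0 + \<beta> * lambda_max Pf / ((1 - \<beta>) * lambda_max B0)))
           \<le> cond_num B \<and>
         cond_num B \<le> cond_num B0 * (1 + \<beta> * lambda_max Pf / ((1 - \<beta>) * lambda_max B0))"
proof -
  have sB0: "sym_mat B0" using assms(3) by (simp add: pos_def_def)
  have sPf: "sym_mat Pf" using assms(4) by (simp add: pos_semidef_def)
  have sB: "sym_mat B" using sB0 sPf
    by (simp add: B_def sym_mat_def transpose_add' transpose_scalar)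
  have qB: "x \<bullet> (B *v x) = (1 - \<beta>) * (x \<bullet> (B0 *v x)) + \<beta> * (x \<bullet> (Pf *v x))" for x
    by (simp add: B_def matrix_vector_mult_add_rdistrib scaleR_matrix_vector_assoc[symmetric] inner_add_right)
  note R0 = rayleigh[OF sB0] and RP = rayleigh[OF sPf] and RB = rayleigh[OF sB]
  define a where "a = lambda_max B0"
  define b where "b = lambda_min B0"
  define p where "p = lambda_max Pf"
  define L where "L = lambda_max B"
  define l where "l = lambda_min B"
  have b0: "b > 0"
  proof -
    obtain x where x: "norm x = 1" "x \<bullet> (B0 *v x) = b" using R0 b_def by blast
    have "x \<noteq> 0" using x by auto
    thus ?thesis using assms(3) x by (auto simp: pos_def_def)
  qed
  have pm0: "lambda_min Pf \<ge> 0"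
  proof -
    obtain x where x: "norm x = 1" "x \<bullet> (Pf *v x) = lambda_min Pf" using RP by blast
    thus ?thesis using assms(4) unfolding pos_semidef_def by metis
  qed
  have ba: "b \<le> a"
  proof -
    obtain x where x: "norm x = 1" "x \<bullet> (B0 *v x) = b" using R0 b_def by blast
    thus ?thesis using R0 a_def by force
  qed
  have p0: "p \<ge> 0"
  proof -
    obtain x where x: "norm x = 1" "x \<bullet> (Pf *v x) = lambda_min Pf" using RP by blast
    thus ?thesis using RP pm0 p_def by force
  qed
  have b1: "1 - \<beta> > 0" using assms(2) by simp
  have i1: "L \<le> (1-\<beta>) * a + \<beta> * p"
  proof -
    obtain x where x: "norm x = 1" "x \<bullet> (B *v x) = L" using RB L_def by blast
    have "x \<bullet> (B0 *v x) \<le> a" "x \<bullet> (Pf *v x) \<le> p" using x(1) R0 RP a_def p_def by auto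
    thus ?thesis using x qB[of x] b1 assms(1) by (smt (verit) mult_left_mono)
  qed
  have i2: "(1-\<beta>) * b \<le> l"
  proof -
    obtain x where x: "norm x = 1" "x \<bullet> (B *v x) = l" using RB l_def by blast
    have "b \<le> x \<bullet> (B0 *v x)" "0 \<le> x \<bullet> (Pf *v x)" using x(1) R0 RP b_def pm0 by force+
    thus ?thesis using x qB[of x] b1 assms(1) by (smt (verit) mult_left_mono mult_nonneg_nonneg)
  qed
  have i3: "l \<le> (1-\<beta>) * b + \<beta> * p"
  proof -
    obtain x where x: "norm x = 1" "x \<bullet> (B0 *v x) = b" using R0 b_def by blast
    have "x \<bullet> (Pf *v x) \<le> p" "l \<le> x \<bullet> (B *v x)" using x(1) RP RB p_def l_def by auto
    thus ?thesis using x qB[of x] b1 assms(1) by (smt (verit) mult_left_mono)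
  qed
  have i4: "(1-\<beta>) * a \<le> L"
  proof -
    obtain x where x: "norm x = 1" "x \<bullet> (B0 *v x) = a" using R0 a_def by blast
    have "0 \<le> x \<bullet> (Pf *v x)" "x \<bullet> (B *v x) \<le> L" using x(1) RP RB L_def pm0 by force+
    thus ?thesis using x qB[of x] b1 assms(1) by (smt (verit) mult_nonneg_nonneg)
  qed
  have i5: "(1-\<beta>) * b + \<beta> * p \<le> L"
  proof -
    obtain x where x: "norm x = 1" "x \<bullet> (Pf *v x) = p" using RP p_def by blast
    have "b \<le> x \<bullet> (B0 *v x)" "x \<bullet> (B *v x) \<le> L" using x(1) R0 RB L_def b_def by auto
    thus ?thesis using x qB[of x] b1 assms(1) by (smt (verit) mult_left_mono)
  qed
  have i6: "l \<le> (1-\<beta>) * a"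
  proof -
    obtain y where y: "y \<noteq> 0" "Pf *v y = 0"
      using assms(5) matrix_nonfull_linear_equations_eq by (metis less_irrefl)
    define x where "x = y /\<^sub>R norm y"
    have x1: "norm x = 1" using y by (simp add: x_def)
    have xP: "Pf *v x = 0" using y by (simp add: x_def matrix_vector_mult_scaleR)
    have "x \<bullet> (B0 *v x) \<le> a" "l \<le> x \<bullet> (B *v x)" using x1 R0 RB a_def l_def by auto
    moreover have "x \<bullet> (Pf *v x) = 0" using xP by simp
    moreover have "(1-\<beta>) * (x \<bullet> (B0 *v x)) \<le> (1-\<beta>) * a"
      using b1 \<open>x \<bullet> (B0 *v x) \<le> a\<close> by (intro mult_left_mono) auto
    moreover have "x \<bullet> (B *v x) = (1-\<beta>) * (x \<bullet> (B0 *v x))"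
      using qB[of x] \<open>x \<bullet> (Pf *v x) = 0\<close> by simp
    ultimately show ?thesis by linarith
  qed
  define s where "s = ((1-\<beta>) * b + \<beta> * p) / ((1-\<beta>) * a)"
  have a0: "a > 0" using b0 ba by simp
  have l0: "l > 0" using i2 b0 b1 by (smt (verit) mult_pos_pos)
  have L0: "L > 0" using i4 a0 b1 by (smt (verit) mult_pos_pos)
  have s_eq: "1 / cond_num B0 + \<beta> * lambda_max Pf / ((1 - \<beta>) * lambda_max B0) = s"
    unfolding cond_num_def s_def a_def[symmetric] b_def[symmetric] p_def[symmetric]
    using a0 b0 b1 by (simp add: field_simps)
  have up_eq: "cond_num B0 * (1 + \<beta> * lambda_max Pf / ((1 - \<beta>) * lambda_max B0))
      = ((1-\<beta>) * a + \<beta> * p) / ((1-\<beta>) * b)"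
    unfolding cond_num_def a_def[symmetric] b_def[symmetric] p_def[symmetric]
    using a0 b0 b1 by (simp add: field_simps)
  have cB: "cond_num B = L / l" by (simp add: cond_num_def L_def l_def)
  have den: "(1-\<beta>) * a > 0" "(1-\<beta>) * b > 0" using a0 b0 b1 by simp_all
  have c1: "s \<le> L / l"
    unfolding s_def using den l0 L0 i5 i6
    by (simp add: divide_le_eq le_divide_eq) (smt (verit) mult_mono mult_nonneg_nonneg)
  have c2: "inverse s \<le> L / l"
  proof -
    have sp: "s > 0" unfolding s_def using den p0 assms(1) by (smt (verit) divide_pos_pos mult_nonneg_nonneg)
    have "inverse s = ((1-\<beta>) * a) / ((1-\<beta>) * b + \<beta> * p)" by (simp add: s_def)
    also have "\<dots> \<le> L / l" using den l0 L0 i4 i3 p0 assms(1)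
      by (simp add: divide_le_eq le_divide_eq) (smt (verit) mult_mono mult_nonneg_nonneg)
    finally show ?thesis .
  qed
  have c3: "L / l \<le> ((1-\<beta>) * a + \<beta> * p) / ((1-\<beta>) * b)"
    using den l0 L0 i1 i2
    by (simp add: divide_le_eq le_divide_eq) (smt (verit) mult_mono mult_nonneg_nonneg)
  show ?thesis using c1 c2 c3 s_eq up_eq cB by simp
qed

end
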